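(* Let $k:\mathcal X\times\mathcal X\to\mathbb R$ be a positive-definite kernel with RKHS $(\mathcal F_k,\langle\cdot,\cdot\rangle_k)$, let $x_1,\dots,x_N\in\mathcal X$ be distinct, $\mathbf z_N\in\mathbb R^N$, and $\nu>0$, $s\in\mathbb N$. Let $\mathbf K_N=[k(x_i,x_j)]_{i,j}$, $\mathbf k_N(x)=[k(x,x_i)]_i$, $\Sigma_N=\mathbf K_N(e^{\nu s\mathbf K_N}-I)^{-1}$, and $$\hat\pi_N(x)=\mathbf k_N(x)^\top(\mathbf K_N+\Sigma_N)^{-1}\mathbf z_N,\quad x\in\mathcal X$$ (the NTK-regime gradient-descent predictor after $s$ steps with learning rate $\nu$ and zero initialization). Define $\Phi_N:\mathbb R^N\to\mathcal F_k$, $\Phi_N\mathbf a=\sum_i a_ik(\cdot,x_i)$, with adjoint $\Phi_N^*\pi=(\pi(x_i))_{i=1}^N$, and the positive self-adjoint operator $R_N=\Phi_N(e^{\nu s\mathbf K_N}-I)^{-1}\Phi_N^*$ on $\mathcal F_k$. Then $\hat\pi_N\in\mathcal F_k$ and $$\hat\pi_N\in\operatorname*{argmin}_{\pi\in\mathcal F_k}\;\sum_{i=1}^N(\pi(x_i)-z_i)^2+\langle\pi,R_N\pi\rangle_k.$$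
   Context: The paper writes the regularizer as $\|R_N^{1/2}\pi\|_k^2=\langle\pi,R_N\pi\rangle_k$. (The paper's displayed statement has a sign typo in the exponent of $R_N$; the version above is the one consistent with $\Sigma_N$ and the proof.) *)

theory Defs
  imports "HOL-Analysis.Analysis"
begin

definition pd_kernel :: "('a \<Rightarrow> 'a \<Rightarrow> real) \<Rightarrow> bool" where
  "pd_kernel k \<longleftrightarrow> (\<forall>x y. k x y = k y x) \<and>
     (\<forall>S a. finite S \<longrightarrow> (\<exists>x\<in>S. a x \<noteq> 0) \<longrightarrow>
        (\<Sum>x\<in>S. \<Sum>y\<in>S. a x * a y * k x y) > 0)"

text \<open>An RKHS for k, presented abstractly: a real Hilbert space 'h, an injective evaluation
map ev identifying each element with a function on 'a (so F_k = range ev, with inner product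
transported from 'h), and kernel sections kf x = k(.,x) with the reproducing property.\<close>
definition is_rkhs :: "('a \<Rightarrow> 'a \<Rightarrow> real) \<Rightarrow> ('h::{real_inner,complete_space} \<Rightarrow> 'a \<Rightarrow> real)
                      \<Rightarrow> ('a \<Rightarrow> 'h) \<Rightarrow> bool" where
  "is_rkhs k ev kf \<longleftrightarrow> inj ev \<and>
     (\<forall>f x. ev f x = inner f (kf x)) \<and>
     (\<forall>x y. ev (kf y) x = k x y)"

definition mpow :: "real^'n^'n \<Rightarrow> nat \<Rightarrow> real^'n^'n" where
  "mpow A m = ((\<lambda>B. B ** A) ^^ m) (mat 1)"

definition mexp :: "real^'n^'n \<Rightarrow> real^'n^'n" where
  "mexp A = (\<chi> i j. (\<Sum>m. mpow A m $ i $ j / fact m))"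

definition gram :: "('a \<Rightarrow> 'a \<Rightarrow> real) \<Rightarrow> ('n::finite \<Rightarrow> 'a) \<Rightarrow> real^'n^'n" where
  "gram k x = (\<chi> i j. k (x i) (x j))"

definition kvec :: "('a \<Rightarrow> 'a \<Rightarrow> real) \<Rightarrow> ('n::finite \<Rightarrow> 'a) \<Rightarrow> 'a \<Rightarrow> real^'n" where
  "kvec k x t = (\<chi> i. k t (x i))"

definition SigmaN :: "('a \<Rightarrow> 'a \<Rightarrow> real) \<Rightarrow> ('n::finite \<Rightarrow> 'a) \<Rightarrow> real \<Rightarrow> nat \<Rightarrow> real^'n^'n" where
  "SigmaN k x \<nu> s = gram k x ** matrix_inv (mexp ((\<nu> * real s) *\<^sub>R gram k x) - mat 1)"

definition pihat :: "('a \<Rightarrow> 'a \<Rightarrow> real) \<Rightarrow> ('n::finite \<Rightarrow> 'a) \<Rightarrow> real^'n \<Rightarrow> real \<Rightarrow> nat \<Rightarrow> 'a \<Rightarrow> real" where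
  "pihat k x z \<nu> s t = kvec k x t \<bullet> (matrix_inv (gram k x + SigmaN k x \<nu> s) *v z)"

definition PhiN :: "('a \<Rightarrow> 'h::real_vector) \<Rightarrow> ('n::finite \<Rightarrow> 'a) \<Rightarrow> real^'n \<Rightarrow> 'h" where
  "PhiN kf x a = (\<Sum>i\<in>UNIV. (a $ i) *\<^sub>R kf (x i))"

definition PhiN_adj :: "('h \<Rightarrow> 'a \<Rightarrow> real) \<Rightarrow> ('n::finite \<Rightarrow> 'a) \<Rightarrow> 'h \<Rightarrow> real^'n" where
  "PhiN_adj ev x f = (\<chi> i. ev f (x i))"

definition RN :: "('a \<Rightarrow> 'a \<Rightarrow> real) \<Rightarrow> ('h::real_vector \<Rightarrow> 'a \<Rightarrow> real) \<Rightarrow> ('a \<Rightarrow> 'h)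
                  \<Rightarrow> ('n::finite \<Rightarrow> 'a) \<Rightarrow> real \<Rightarrow> nat \<Rightarrow> 'h \<Rightarrow> 'h" where
  "RN k ev kf x \<nu> s f = PhiN kf x (matrix_inv (mexp ((\<nu> * real s) *\<^sub>R gram k x) - mat 1)
                                    *v PhiN_adj ev x f)"

definition objective :: "('a \<Rightarrow> 'a \<Rightarrow> real) \<Rightarrow> ('h::real_inner \<Rightarrow> 'a \<Rightarrow> real) \<Rightarrow> ('a \<Rightarrow> 'h)
                  \<Rightarrow> ('n::finite \<Rightarrow> 'a) \<Rightarrow> real^'n \<Rightarrow> real \<Rightarrow> nat \<Rightarrow> 'h \<Rightarrow> real" where
  "objective k ev kf x z \<nu> s f =
     (\<Sum>i\<in>UNIV. (ev f (x i) - z $ i)\<^sup>2) + inner f (RN k ev kf x \<nu> s f)"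

end

theory Submission
  imports Defs
begin


lemma minv:
  fixes A :: "real^'n^'n"
  assumes "\<And>v. A *v v = 0 \<Longrightarrow> v = 0"
  shows "A ** matrix_inv A = mat 1" "matrix_inv A ** A = mat 1"
proof -
  obtain B where "B ** A = mat 1" using assms matrix_left_invertible_ker by blast
  hence "\<exists>A'. A ** A' = mat 1 \<and> A' ** A = mat 1" using matrix_left_right_inverse by blast
  from someI_ex[OF this] show "A ** matrix_inv A = mat 1" "matrix_inv A ** A = mat 1"
    unfolding matrix_inv_def by auto
qed

lemma sym_dot:
  fixes X :: "real^'n^'n"
  assumes "transpose X = X"
  shows "(X *v p) \<bullet> q = p \<bullet> (X *v q)"
  by (metis assms dot_lmul_matrix inner_commute transpose_matrix_vector)

lemma mpow_Suc: "mpow A (Suc m) = mpow A m ** A"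
  by (simp add: mpow_def)
lemma mpow_0: "mpow A 0 = mat 1"
  by (simp add: mpow_def)

lemma mpow_comm:
  assumes "A ** K = K ** A"
  shows "mpow A m ** K = K ** mpow A m"
  by (induction m) (simp_all add: mpow_0 mpow_Suc, metis assms matrix_mul_assoc)

lemma mpow_add: "mpow A (m + n) = mpow A m ** mpow A n"
proof (induction n)
  case 0 then show ?case by (simp add: mpow_0)
next
  case (Suc n) then show ?case by (simp add: mpow_Suc matrix_mul_assoc)
qed

lemma mpow_sym:
  assumes "transpose A = A"
  shows "transpose (mpow A m) = mpow A m"
proof (induction m)
  case 0 then show ?case by (simp add: mpow_0)
next
  case (Suc m)
  have c: "mpow A m ** A = A ** mpow A m" using mpow_comm[of A A m] by simp
  show ?case by (simp add: mpow_Suc matrix_transpose_mul Suc assms c)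
qed

lemma mpow_bound:
  fixes A :: "real^'n^'n"
  shows "\<bar>mpow A m $ i $ j\<bar> \<le> (\<Sum>a\<in>UNIV. \<Sum>b\<in>UNIV. \<bar>A $ a $ b\<bar>) ^ m"
proof (induction m arbitrary: i j)
  case 0 then show ?case by (simp add: mpow_0 mat_def)
next
  case (Suc m)
  define B where "B = (\<Sum>a\<in>UNIV. \<Sum>b\<in>UNIV. \<bar>A $ a $ b\<bar>)"
  have B0: "B \<ge> 0" unfolding B_def by (intro sum_nonneg) auto
  have "\<bar>mpow A (Suc m) $ i $ j\<bar> = \<bar>\<Sum>k\<in>UNIV. mpow A m $ i $ k * A $ k $ j\<bar>"
    by (simp add: mpow_Suc matrix_matrix_mult_def)
  also have "\<dots> \<le> (\<Sum>k\<in>UNIV. \<bar>mpow A m $ i $ k\<bar> * \<bar>A $ k $ j\<bar>)"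
    by (metis (no_types, lifting) abs_mult sum.cong sum_abs)
  also have "\<dots> \<le> (\<Sum>k\<in>UNIV. B^m * \<bar>A $ k $ j\<bar>)"
    unfolding B_def using Suc.IH by (intro sum_mono mult_right_mono) auto
  also have "\<dots> = B^m * (\<Sum>k\<in>UNIV. \<bar>A $ k $ j\<bar>)" by (simp add: sum_distrib_left)
  also have "(\<Sum>k\<in>UNIV. \<bar>A $ k $ j\<bar>) \<le> B"
    unfolding B_def by (intro sum_mono member_le_sum) auto
  hence "B^m * (\<Sum>k\<in>UNIV. \<bar>A $ k $ j\<bar>) \<le> B^m * B" using B0 by (simp add: mult_left_mono)
  finally show ?case by (simp add: B_def mult.commute)
qed

lemma mexp_summable:
  fixes A :: "real^'n^'n"
  shows "summable (\<lambda>m. mpow A m $ i $ j / fact m)"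
proof (rule summable_comparison_test[OF _ summable_exp[of "\<Sum>a\<in>UNIV. \<Sum>b\<in>UNIV. \<bar>A $ a $ b\<bar>"]])
  show "\<exists>N. \<forall>n\<ge>N. norm (mpow A n $ i $ j / fact n) \<le> inverse (fact n) * (\<Sum>a\<in>UNIV. \<Sum>b\<in>UNIV. \<bar>A $ a $ b\<bar>) ^ n"
    using mpow_bound[of A] by (auto simp: divide_simps intro!: exI[of _ 0])
qed

lemma lin_suminf:
  fixes f :: "'b \<Rightarrow> nat \<Rightarrow> real"
  assumes "finite I" "\<And>l. l \<in> I \<Longrightarrow> summable (f l)"
  shows "(\<Sum>l\<in>I. w l * suminf (f l)) = (\<Sum>m. \<Sum>l\<in>I. w l * f l m)"
    "summable (\<lambda>m. \<Sum>l\<in>I. w l * f l m)"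
proof -
  have s: "\<And>l. l \<in> I \<Longrightarrow> summable (\<lambda>m. w l * f l m)" using assms(2) summable_mult by blast
  show "(\<Sum>l\<in>I. w l * suminf (f l)) = (\<Sum>m. \<Sum>l\<in>I. w l * f l m)"
    by (subst suminf_sum[OF s]) (auto simp: suminf_mult assms(2))
  show "summable (\<lambda>m. \<Sum>l\<in>I. w l * f l m)" using s by (rule summable_sum)
qed

lemma quad_expand:
  fixes X :: "real^'n^'n"
  shows "d \<bullet> (X *v d) = (\<Sum>a\<in>UNIV. \<Sum>b\<in>UNIV. (d$a * d$b) * X$a$b)"
  by (simp add: inner_vec_def matrix_vector_mult_def sum_distrib_left mult_ac)

lemma mexp_entry: "mexp A $ i $ j = (\<Sum>m. mpow A m $ i $ j / fact m)"
  by (simp add: mexp_def)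

lemma mexp_quad:
  fixes A :: "real^'n^'n"
  shows "d \<bullet> (mexp A *v d) = (\<Sum>m. (d \<bullet> (mpow A m *v d)) / fact m)"
    "summable (\<lambda>m. (d \<bullet> (mpow A m *v d)) / fact m)"
proof -
  define f where "f = (\<lambda>a b m. mpow A m $ a $ b / fact m)"
  have inner: "\<And>a. (\<Sum>b\<in>UNIV. (d$a * d$b) * mexp A $a$b) = (\<Sum>m. \<Sum>b\<in>UNIV. (d$a * d$b) * f a b m)"
     "\<And>a. summable (\<lambda>m. \<Sum>b\<in>UNIV. (d$a * d$b) * f a b m)"
    using lin_suminf[of UNIV "f a" "\<lambda>b. d$a * d$b" for a] mexp_summable[of A]
    by (auto simp: f_def mexp_entry)
  have "d \<bullet> (mexp A *v d) = (\<Sum>a\<in>UNIV. 1 * (\<Sum>m. \<Sum>b\<in>UNIV. (d$a * d$b) * f a b m))"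
    by (simp add: quad_expand inner)
  also have "\<dots> = (\<Sum>m. \<Sum>a\<in>UNIV. 1 * (\<Sum>b\<in>UNIV. (d$a * d$b) * f a b m))"
    by (rule lin_suminf) (use inner in auto)
  also have "\<dots> = (\<Sum>m. (d \<bullet> (mpow A m *v d)) / fact m)"
    by (simp add: quad_expand f_def sum_divide_distrib)
  finally show "d \<bullet> (mexp A *v d) = (\<Sum>m. (d \<bullet> (mpow A m *v d)) / fact m)" .
  have "summable (\<lambda>m. \<Sum>a\<in>UNIV. 1 * (\<Sum>b\<in>UNIV. (d$a * d$b) * f a b m))"
    by (rule lin_suminf) (use inner in auto)
  then show "summable (\<lambda>m. (d \<bullet> (mpow A m *v d)) / fact m)"
    by (simp add: quad_expand f_def sum_divide_distrib)
qed

lemma mexp_comm: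
  fixes A K :: "real^'n^'n"
  assumes "A ** K = K ** A"
  shows "K ** mexp A = mexp A ** K"
proof -
  have "(K ** mexp A) $ i $ j = (mexp A ** K) $ i $ j" for i j
  proof -
    have "(K ** mexp A) $ i $ j = (\<Sum>k\<in>UNIV. K$i$k * (\<Sum>m. mpow A m $ k $ j / fact m))"
      by (simp add: matrix_matrix_mult_def mexp_entry)
    also have "\<dots> = (\<Sum>m. \<Sum>k\<in>UNIV. K$i$k * (mpow A m $ k $ j / fact m))"
      by (rule lin_suminf) (auto simp: mexp_summable)
    also have "\<dots> = (\<Sum>m. (K ** mpow A m) $ i $ j / fact m)"
      by (simp add: matrix_matrix_mult_def sum_divide_distrib)
    also have "\<dots> = (\<Sum>m. (mpow A m ** K) $ i $ j / fact m)"
      using mpow_comm[OF assms] by simp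
    also have "\<dots> = (\<Sum>m. \<Sum>k\<in>UNIV. K$k$j * (mpow A m $ i $ k / fact m))"
      by (simp add: matrix_matrix_mult_def sum_divide_distrib mult_ac)
    also have "\<dots> = (\<Sum>k\<in>UNIV. K$k$j * (\<Sum>m. mpow A m $ i $ k / fact m))"
      by (rule lin_suminf(1)[symmetric]) (auto simp: mexp_summable)
    also have "\<dots> = (mexp A ** K) $ i $ j"
      by (simp add: matrix_matrix_mult_def mexp_entry mult_ac)
    finally show ?thesis .
  qed
  then show ?thesis by (simp add: vec_eq_iff)
qed

lemma mexp_sym:
  fixes A :: "real^'n^'n"
  assumes "transpose A = A"
  shows "transpose (mexp A) = mexp A"
proof -
  have "mpow A m $ j $ i = mpow A m $ i $ j" for m i j
    using mpow_sym[OF assms, of m] by (metis transpose_def vec_lambda_beta)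
  then show ?thesis by (simp add: vec_eq_iff transpose_def mexp_entry)
qed

lemma mpow_quad_nonneg:
  fixes A :: "real^'n^'n"
  assumes "transpose A = A" "\<And>d. d \<bullet> (A *v d) \<ge> 0"
  shows "d \<bullet> (mpow A m *v d) \<ge> 0"
proof -
  define j where "j = m div 2"
  have "m = j + j \<or> m = j + Suc j" unfolding j_def by presburger
  then show ?thesis
  proof
    assume m: "m = j + j"
    have "d \<bullet> (mpow A m *v d) = (mpow A j *v d) \<bullet> (mpow A j *v d)"
      by (simp add: m mpow_add matrix_vector_mul_assoc[symmetric] sym_dot[OF mpow_sym[OF assms(1)]])
    then show ?thesis by simp
  next
    assume m: "m = j + Suc j"
    have s1: "mpow A (Suc j) = A ** mpow A j"
      using mpow_add[of A 1 j] by (simp add: mpow_Suc mpow_0)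
    have "d \<bullet> (mpow A m *v d) = (mpow A j *v d) \<bullet> (A *v (mpow A j *v d))"
      unfolding m mpow_add s1 matrix_vector_mul_assoc[symmetric] by (simp add: sym_dot[OF mpow_sym[OF assms(1)]])
    then show ?thesis using assms(2) by simp
  qed
qed



lemma mm_diff_l: "(A::real^'n^'n) ** (B - C) = A ** B - A ** C"
  by (simp add: vec_eq_iff matrix_matrix_mult_def sum_subtractf right_diff_distrib)
lemma mm_diff_r: "((B::real^'n^'n) - C) ** A = B ** A - C ** A"
  by (simp add: vec_eq_iff matrix_matrix_mult_def sum_subtractf left_diff_distrib)
lemma mm_add_r: "((B::real^'n^'n) + C) ** A = B ** A + C ** A"
  by (simp add: vec_eq_iff matrix_matrix_mult_def sum.distrib distrib_right)
lemma tr_diff: "transpose ((B::real^'n^'n) - C) = transpose B - transpose C"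
  by (simp add: vec_eq_iff transpose_def)
lemma tr_scale: "transpose (c *\<^sub>R (B::real^'n^'n)) = c *\<^sub>R transpose B"
  by (simp add: vec_eq_iff transpose_def)
lemma scale_mv: "(c *\<^sub>R (A::real^'n^'n)) *v v = c *\<^sub>R (A *v v)"
  by (simp add: vec_eq_iff matrix_vector_mult_def sum_distrib_left mult_ac)
lemma scale_mm: "(c *\<^sub>R (A::real^'n^'n)) ** B = c *\<^sub>R (A ** B)" "B ** (c *\<^sub>R A) = c *\<^sub>R (B ** A)"
  by (simp_all add: vec_eq_iff matrix_matrix_mult_def sum_distrib_left mult_ac)

lemma gram_pd:
  fixes x :: "'n::finite \<Rightarrow> 'a"
  assumes "pd_kernel k" "inj x" "d \<noteq> 0"
  shows "d \<bullet> (gram k x *v d) > 0"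
proof -
  define a where "a = (\<lambda>y. d $ (inv x y))"
  have ax: "a (x i) = d $ i" for i using assms(2) by (simp add: a_def)
  obtain i where "d $ i \<noteq> 0" using assms(3) by (metis vec_eq_iff zero_index)
  hence ex: "\<exists>y\<in>range x. a y \<noteq> 0" using ax by auto
  have "(\<Sum>y\<in>range x. \<Sum>y'\<in>range x. a y * a y' * k y y') > 0"
    using assms(1) ex unfolding pd_kernel_def by auto
  also have "(\<Sum>y\<in>range x. \<Sum>y'\<in>range x. a y * a y' * k y y') = (\<Sum>i\<in>UNIV. \<Sum>j\<in>UNIV. d$i * d$j * k (x i) (x j))"
    by (simp add: sum.reindex[OF assms(2)] ax)
  also have "\<dots> = d \<bullet> (gram k x *v d)"
    by (simp add: quad_expand gram_def)
  finally show ?thesis .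
qed


theorem mainTheorem8:
  fixes k :: "'a \<Rightarrow> 'a \<Rightarrow> real"
    and ev :: "'h::{real_inner,complete_space} \<Rightarrow> 'a \<Rightarrow> real"
    and kf :: "'a \<Rightarrow> 'h"
    and x :: "'n::finite \<Rightarrow> 'a"
    and z :: "real^'n"
    and \<nu> :: real and s :: nat
  assumes "pd_kernel k"
    and "is_rkhs k ev kf"
    and "inj x"
    and "\<nu> > 0"
    and "s \<ge> 1"
  shows "\<exists>f. ev f = pihat k x z \<nu> s \<and>
             (\<forall>g. objective k ev kf x z \<nu> s f \<le> objective k ev kf x z \<nu> s g)"
proof -
  define K where "K = gram k x"
  define c where "c = \<nu> * real s"
  define A where "A = c *\<^sub>R K"
  define E where "E = mexp A"
  define P where "P = E - mat 1"
  define M where "M = matrix_inv P"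
  have c0: "c > 0" using assms(4,5) by (simp add: c_def)
  have Ksym: "transpose K = K"
    using assms(1) by (simp add: pd_kernel_def K_def gram_def transpose_def vec_eq_iff)
  have Kpd: "d \<noteq> 0 \<Longrightarrow> d \<bullet> (K *v d) > 0" for d
    using gram_pd[OF assms(1,3)] by (simp add: K_def)
  have Kpsd: "d \<bullet> (K *v d) \<ge> 0" for d
    using Kpd[of d] by (cases "d = 0") auto
  have Asym: "transpose A = A" by (simp add: A_def tr_scale Ksym)
  have Apsd: "d \<bullet> (A *v d) \<ge> 0" for d
    using Kpsd[of d] c0 by (simp add: A_def scale_mv)
  have AK: "A ** K = K ** A" by (simp add: A_def scale_mm)
  have Esym: "transpose E = E" by (simp add: E_def mexp_sym Asym)
  have Psym: "transpose P = P" by (simp add: P_def tr_diff Esym)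
  have Ppd: "d \<bullet> (P *v d) > 0" if "d \<noteq> 0" for d
  proof -
    define q where "q = (\<lambda>m. (d \<bullet> (mpow A m *v d)) / fact m)"
    have sq: "summable q" using mexp_quad(2) by (simp add: q_def)
    have "d \<bullet> (P *v d) = suminf q - q 0"
      by (simp add: P_def q_def E_def mexp_quad(1) matrix_vector_mult_diff_rdistrib inner_diff_right mpow_0)
    also have "\<dots> = (\<Sum>m. q (Suc m))" using suminf_split_head[OF sq] by simp
    also have "\<dots> > 0"
    proof (rule suminf_pos2)
      show "summable (\<lambda>m. q (Suc m))" using sq by (simp add: summable_Suc_iff)
      show "0 \<le> q (Suc n)" for n unfolding q_def using mpow_quad_nonneg[OF Asym Apsd] by simp
      show "0 < q (Suc 0)" unfolding q_def using Kpd[OF that] c0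
        by (simp add: mpow_Suc mpow_0 A_def scale_mv)
    qed
    finally show ?thesis .
  qed
  have Pker: "P *v d = 0 \<Longrightarrow> d = 0" for d using Ppd[of d] by fastforce
  have PM: "P ** M = mat 1" "M ** P = mat 1" using minv[OF Pker] by (simp_all add: M_def)
  have KP: "K ** P = P ** K"
    using mexp_comm[OF AK] by (simp add: P_def E_def mm_diff_l mm_diff_r)
  have KM: "K ** M = M ** K"
  proof -
    have "M ** (K ** P) ** M = M ** (P ** K) ** M" by (simp add: KP)
    then show ?thesis by (simp add: matrix_mul_assoc PM) (metis PM(2) matrix_mul_assoc matrix_mul_lid matrix_mul_rid PM(1))
  qed
  have Msym: "(M *v u) \<bullet> w = u \<bullet> (M *v w)" for u w
  proof -
    have u: "u = P *v (M *v u)" and w: "w = P *v (M *v w)"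
      by (simp_all add: matrix_vector_mul_assoc PM)
    have "(M *v u) \<bullet> w = (M *v u) \<bullet> (P *v (M *v w))" using w by simp
    also have "\<dots> = (P *v (M *v u)) \<bullet> (M *v w)" using sym_dot[OF Psym] by simp
    finally show ?thesis using u by simp
  qed
  have Mpsd: "(M *v d) \<bullet> d \<ge> 0" for d
  proof -
    have d: "d = P *v (M *v d)" by (simp add: matrix_vector_mul_assoc PM)
    have "(M *v d) \<bullet> d = (M *v d) \<bullet> (P *v (M *v d))" using d by simp
    also have "\<dots> \<ge> 0" using Ppd[of "M *v d"] by (cases "M *v d = 0") auto
    finally show ?thesis .
  qed
  define IM where "IM = mat 1 + M"
  have IMker: "IM *v d = 0 \<Longrightarrow> d = 0" for d
  proof -
    assume "IM *v d = 0"
    hence "d + M *v d = 0" by (simp add: IM_def matrix_vector_mult_add_rdistrib)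
    hence "d \<bullet> d + (M *v d) \<bullet> d = 0" by (metis inner_add_left inner_zero_left)
    thus "d = 0" using Mpsd[of d] by (smt (verit) inner_ge_zero inner_eq_zero_iff)
  qed
  have Kker: "K *v d = 0 \<Longrightarrow> d = 0" for d using Kpd[of d] by fastforce
  define G where "G = K + SigmaN k x \<nu> s"
  have G: "G = K ** IM"
    by (simp add: G_def SigmaN_def K_def[symmetric] c_def[symmetric] A_def[symmetric] E_def[symmetric]
        P_def[symmetric] M_def[symmetric] IM_def matrix_add_ldistrib)
  have Gker: "G *v d = 0 \<Longrightarrow> d = 0" for d
    using Kker IMker by (metis G matrix_vector_mul_assoc)
  have GG: "G ** matrix_inv G = mat 1" using minv[OF Gker] by simp
  define a where "a = matrix_inv G *v z"
  define vs where "vs = K *v a"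
  have IMvs: "IM *v vs = z"
  proof -
    have "IM ** K = K ** IM" by (simp add: IM_def mm_add_r matrix_add_ldistrib KM)
    hence "IM *v vs = G *v a" by (simp add: vs_def G matrix_vector_mul_assoc)
    also have "\<dots> = z" by (simp add: a_def matrix_vector_mul_assoc GG)
    finally show ?thesis .
  qed
  have rk: "\<And>f t. ev f t = inner f (kf t)" "\<And>t y. ev (kf y) t = k t y"
    using assms(2) unfolding is_rkhs_def by auto
  have kk: "inner (kf y) (kf t) = k t y" for t y
    using rk by metis
  define f where "f = PhiN kf x a"
  have evf: "ev f t = (\<Sum>i\<in>UNIV. a $ i * k t (x i))" for t
    by (simp add: f_def PhiN_def rk(1) inner_sum_left kk)
  have "ev f = pihat k x z \<nu> s"
    by (rule ext) (simp add: evf pihat_def G_def K_def a_def kvec_def inner_vec_def mult.commute)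
  moreover have adjf: "PhiN_adj ev x f = vs"
    by (simp add: PhiN_adj_def evf vs_def K_def gram_def matrix_vector_mult_def vec_eq_iff mult.commute)
  define J where "J = (\<lambda>v. (v - z) \<bullet> (v - z) + (M *v v) \<bullet> v)"
  have obj: "objective k ev kf x z \<nu> s g = J (PhiN_adj ev x g)" for g
  proof -
    have "inner g (RN k ev kf x \<nu> s g) = (M *v PhiN_adj ev x g) \<bullet> PhiN_adj ev x g"
      by (simp add: RN_def K_def[symmetric] c_def[symmetric] A_def[symmetric] E_def[symmetric]
        P_def[symmetric] M_def[symmetric] PhiN_def inner_sum_right rk inner_vec_def PhiN_adj_def)
    moreover have "(\<Sum>i\<in>UNIV. (ev g (x i) - z $ i)\<^sup>2) = (PhiN_adj ev x g - z) \<bullet> (PhiN_adj ev x g - z)"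
      by (simp add: inner_vec_def PhiN_adj_def power2_eq_square)
    ultimately show ?thesis by (simp add: objective_def J_def)
  qed
  have Jmin: "J vs \<le> J v" for v
  proof -
    define d where "d = v - vs"
    define u where "u = M *v vs"
    have z: "z = vs + u" using IMvs by (simp add: IM_def u_def matrix_vector_mult_add_rdistrib)
    have v: "v = vs + d" by (simp add: d_def)
    have s1: "(M *v d) \<bullet> vs = d \<bullet> u" using Msym by (simp add: u_def)
    have "J v = J vs + d \<bullet> d + (M *v d) \<bullet> d"
      unfolding J_def v z
      by (simp add: matrix_vector_right_distrib inner_add_left inner_add_right inner_diff_left inner_diff_right s1 u_def[symmetric] inner_commute[of u d])
    then show ?thesis using Mpsd[of d] inner_ge_zero[of d] by linarith
  qed
  ultimately show ?thesis using obj adjf by (intro exI[of _ f]) auto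
qed

end
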